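(* Let $d\ge3$ and let $\mu,\mu_1,\mu_2,\dots$ be positive $\sigma$-finite measures on $\mathbb R^d$. If for every $x\in\mathbb R^d$, $\liminf_{n\to\infty} g*\mu_n(x)\ge g*\mu(x)$, then $\liminf_{n\to\infty}\mu_n(\mathbb R^d)\ge\mu(\mathbb R^d)$.
   Context: $g(x,y)=g(x-y)=\frac{\Gamma(d/2-1)}{2\pi^{d/2}}|x-y|^{2-d}$ is the Green function of standard Brownian motion in $\mathbb R^d$, and $g*\nu(x):=\int_{\mathbb R^d}g(x,y)\,\nu(dy)$. *)

theory Defs
  imports "HOL-Analysis.Analysis"
begin

text \<open>Green function of standard Brownian motion on R^d (d = DIM('a)):
  g(z) = Gamma(d/2-1)/(2 pi^(d/2)) |z|^(2-d), with g(0) = +infinity.\<close>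
definition green_kernel :: "'a::euclidean_space \<Rightarrow> ennreal" where
  "green_kernel z = (if z = 0 then \<infinity> else
     ennreal (Gamma (real DIM('a) / 2 - 1) / (2 * pi powr (real DIM('a) / 2))
              * norm z powr (2 - real DIM('a))))"

definition green_potential :: "'a::euclidean_space measure \<Rightarrow> 'a \<Rightarrow> ennreal" where
  "green_potential \<nu> x = (\<integral>\<^sup>+ y. green_kernel (x - y) \<partial>\<nu>)"

end

theory Submission
  imports Defs
begin

definition gc :: "'a::euclidean_space itself \<Rightarrow> real" where
  "gc _ = Gamma (real DIM('a) / 2 - 1) / (2 * pi powr (real DIM('a) / 2))"

lemma green_kernel_alt:
  "green_kernel (z::'a::euclidean_space) = (if z = 0 then \<infinity> else ennreal (gc TYPE('a) * norm z powr (2 - real DIM('a))))"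
  unfolding green_kernel_def gc_def by simp

lemma gc_pos: assumes "DIM('a::euclidean_space) \<ge> 3" shows "gc TYPE('a) > 0"
proof -
  have "real DIM('a) / 2 - 1 > 0" using assms by simp
  then have "Gamma (real DIM('a) / 2 - 1) > 0" by (rule Gamma_real_pos)
  then show ?thesis unfolding gc_def by simp
qed

lemma green_kernel_measurable[measurable]: "green_kernel \<in> borel_measurable (borel :: 'a::euclidean_space measure)"
  unfolding green_kernel_alt[abs_def] by measurable

lemma green_kernel_scale:
  assumes "r > 0"
  shows "green_kernel (r *\<^sub>R (z::'a::euclidean_space)) = ennreal (r powr (2 - real DIM('a))) * green_kernel z"
proof (cases "z = 0")
  case True then show ?thesis using assms by (simp add: green_kernel_alt ennreal_mult_top)
next
  case False
  then have "norm (r *\<^sub>R z) powr (2 - real DIM('a)) = r powr (2 - real DIM('a)) * norm z powr (2 - real DIM('a))"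
    using assms by (simp add: powr_mult)
  then show ?thesis using False assms
    by (simp add: green_kernel_alt ennreal_mult'[symmetric] mult_ac)
qed

lemma ball_borel[measurable]: "ball (c::'a::euclidean_space) r \<in> sets borel" by auto

definition GG :: "'a::euclidean_space \<Rightarrow> ennreal" where
  "GG w = (\<integral>\<^sup>+ u. indicator (ball 0 1) u * green_kernel (u - w) \<partial>lborel)"

lemma scale_integral:
  fixes y :: "'a::euclidean_space"
  assumes r: "r > 0"
  shows "(\<integral>\<^sup>+ x. indicator (ball 0 r) x * green_kernel (x - y) \<partial>lborel) = ennreal (r^2) * GG ((1/r) *\<^sub>R y)"
proof -
  have "(\<integral>\<^sup>+ x. indicator (ball 0 r) x * green_kernel (x - y) \<partial>lborel)
     = (\<integral>\<^sup>+ x. ennreal (\<bar>r\<bar> ^ DIM('a)) * (indicator (ball 0 r) (0 + r *\<^sub>R x) * green_kernel ((0 + r *\<^sub>R x) - y)) \<partial>lborel)"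
    using r apply (subst lborel_affine[where c=r and t=0])
     apply simp
    apply simp
    apply (subst nn_integral_density)
      apply (subst measurable_cong_sets[where M'=borel and N'=borel], simp, simp)
      apply measurable
    apply (subst nn_integral_distr)
      apply measurable
    done
  also have "\<dots> = (\<integral>\<^sup>+ x. ennreal (r^2) * (indicator (ball 0 1) x * green_kernel (x - (1/r) *\<^sub>R y)) \<partial>lborel)"
  proof (rule nn_integral_cong)
    fix x :: 'a
    have i: "indicator (ball 0 r) (r *\<^sub>R x) = (indicator (ball 0 1) x :: ennreal)"
      using r by (simp add: indicator_def abs_of_pos)
    have rx: "r *\<^sub>R (x - (1/r) *\<^sub>R y) = r *\<^sub>R x - y"
      using r by (simp add: scaleR_diff_right)
    have k: "green_kernel (r *\<^sub>R x - y) = ennreal (r powr (2 - real DIM('a))) * green_kernel (x - (1/r) *\<^sub>R y)"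
      using green_kernel_scale[OF r, of "x - (1/r) *\<^sub>R y"] unfolding rx .
    have e: "\<bar>r\<bar> ^ DIM('a) * r powr (2 - real DIM('a)) = r^2"
    proof -
      have "\<bar>r\<bar> ^ DIM('a) = r powr real DIM('a)" using r by (simp add: powr_realpow)
      then have "\<bar>r\<bar> ^ DIM('a) * r powr (2 - real DIM('a)) = r powr (real DIM('a) + (2 - real DIM('a)))"
        by (simp only: powr_add)
      also have "\<dots> = r powr (real (2::nat))" by simp
      also have "\<dots> = r^2" using r by (rule powr_realpow)
      finally show ?thesis .
    qed
    have e2: "ennreal (r^2) = ennreal (\<bar>r\<bar> ^ DIM('a)) * ennreal (r powr (2 - real DIM('a)))"
      unfolding e[symmetric] by (rule ennreal_mult) auto
    show "ennreal (\<bar>r\<bar> ^ DIM('a)) * (indicator (ball 0 r) (0 + r *\<^sub>R x) * green_kernel ((0 + r *\<^sub>R x) - y)) =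
        ennreal (r^2) * (indicator (ball 0 1) x * green_kernel (x - (1/r) *\<^sub>R y))"
      unfolding add_0_left i k e2 by (simp only: mult_ac)
  qed
  also have "\<dots> = ennreal (r^2) * GG ((1/r) *\<^sub>R y)"
    unfolding GG_def by (rule nn_integral_cmult) measurable
  finally show ?thesis .
qed

lemma bathtub:
  fixes f :: "'a::euclidean_space \<Rightarrow> ennreal"
  assumes f[measurable]: "f \<in> borel_measurable borel"
    and A[measurable]: "A \<in> sets borel" and B[measurable]: "B \<in> sets borel"
    and eq: "emeasure lborel A = emeasure lborel B" and fin: "emeasure lborel B < \<infinity>"
    and inB: "\<And>z. z \<in> B \<Longrightarrow> k \<le> f z" and outB: "\<And>z. z \<notin> B \<Longrightarrow> f z \<le> k"
  shows "(\<integral>\<^sup>+ z. indicator A z * f z \<partial>lborel) \<le> (\<integral>\<^sup>+ z. indicator B z * f z \<partial>lborel)"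
proof -
  have finA: "emeasure lborel A < \<infinity>" using eq fin by simp
  have "emeasure lborel (A - B) = emeasure lborel (A - A \<inter> B)" by (simp add: Diff_Int)
  also have "\<dots> = emeasure lborel A - emeasure lborel (A \<inter> B)"
    using finA by (intro emeasure_Diff) (auto simp: top.not_eq_extremum
        intro: le_less_trans[OF emeasure_mono[of "A \<inter> B" A]])
  also have "\<dots> = emeasure lborel B - emeasure lborel (B \<inter> A)" by (simp add: eq Int_commute)
  also have "\<dots> = emeasure lborel (B - B \<inter> A)"
    using fin by (intro emeasure_Diff[symmetric]) (auto simp: top.not_eq_extremum
        intro: le_less_trans[OF emeasure_mono[of "B \<inter> A" B]])
  also have "\<dots> = emeasure lborel (B - A)" by (simp add: Diff_Int)
  finally have mD: "emeasure lborel (A - B) = emeasure lborel (B - A)" .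
  have sA: "(\<integral>\<^sup>+ z. indicator A z * f z \<partial>lborel) = (\<integral>\<^sup>+ z. indicator (A \<inter> B) z * f z \<partial>lborel) + (\<integral>\<^sup>+ z. indicator (A - B) z * f z \<partial>lborel)"
    by (subst nn_integral_add[symmetric]) (auto intro!: nn_integral_cong simp: indicator_def)
  have sB: "(\<integral>\<^sup>+ z. indicator B z * f z \<partial>lborel) = (\<integral>\<^sup>+ z. indicator (A \<inter> B) z * f z \<partial>lborel) + (\<integral>\<^sup>+ z. indicator (B - A) z * f z \<partial>lborel)"
    by (subst nn_integral_add[symmetric]) (auto intro!: nn_integral_cong simp: indicator_def)
  have "(\<integral>\<^sup>+ z. indicator (A - B) z * f z \<partial>lborel) \<le> (\<integral>\<^sup>+ z. k * indicator (A - B) z \<partial>lborel)"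
    by (intro nn_integral_mono) (auto simp: indicator_def outB)
  also have "\<dots> = k * emeasure lborel (A - B)" by (subst nn_integral_cmult_indicator) auto
  also have "\<dots> = k * emeasure lborel (B - A)" by (simp add: mD)
  also have "\<dots> = (\<integral>\<^sup>+ z. k * indicator (B - A) z \<partial>lborel)" by (subst nn_integral_cmult_indicator) auto
  also have "\<dots> \<le> (\<integral>\<^sup>+ z. indicator (B - A) z * f z \<partial>lborel)"
    by (intro nn_integral_mono) (auto simp: indicator_def inB)
  finally show ?thesis unfolding sA sB by (rule add_left_mono)
qed

lemma kernel_ge:
  assumes d: "DIM('a::euclidean_space) \<ge> 3" and z: "norm (z::'a) < 1"
  shows "ennreal (gc TYPE('a)) \<le> green_kernel z"
proof (cases "z = 0")
  case False
  then have "1 powr (2 - real DIM('a)) \<le> norm z powr (2 - real DIM('a))"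
    using d z by (intro powr_mono2') auto
  then have "gc TYPE('a) * 1 \<le> gc TYPE('a) * norm z powr (2 - real DIM('a))"
    using gc_pos[OF d] by (intro mult_left_mono) auto
  then show ?thesis using False by (simp add: green_kernel_alt ennreal_leI)
qed (simp add: green_kernel_alt)

lemma kernel_le:
  assumes d: "DIM('a::euclidean_space) \<ge> 3" and z: "norm (z::'a) \<ge> 1"
  shows "green_kernel z \<le> ennreal (gc TYPE('a))"
proof -
  have nz: "z \<noteq> 0" using z by auto
  then have "norm z powr (2 - real DIM('a)) \<le> 1 powr (2 - real DIM('a))"
    using d z by (intro powr_mono2') auto
  then have "gc TYPE('a) * norm z powr (2 - real DIM('a)) \<le> gc TYPE('a) * 1"
    using gc_pos[OF d] by (intro mult_left_mono) auto
  then show ?thesis using nz by (simp add: green_kernel_alt ennreal_leI)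
qed

lemma GG_shift: "GG w = (\<integral>\<^sup>+ z. indicator (ball (-w) 1) z * green_kernel z \<partial>lborel)"
proof -
  have "GG w = (\<integral>\<^sup>+ z. ennreal (\<bar>1\<bar> ^ DIM('a)) * (indicator (ball 0 1) (w + (1::real) *\<^sub>R z) * green_kernel ((w + (1::real) *\<^sub>R z) - w)) \<partial>lborel)"
    unfolding GG_def
    apply (subst lborel_affine[where c=1 and t=w])
     apply simp
    apply (subst nn_integral_density)
      apply (subst measurable_cong_sets[where M'=borel and N'=borel], simp, simp)
      apply measurable
    apply (subst nn_integral_distr)
      apply measurable
    done
  also have "\<dots> = (\<integral>\<^sup>+ z. indicator (ball (-w) 1) z * green_kernel z \<partial>lborel)"
    by (intro nn_integral_cong) (simp add: indicator_def dist_norm norm_minus_commute add.commute)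
  finally show ?thesis .
qed


lemma GG_le:
  assumes d: "DIM('a::euclidean_space) \<ge> 3"
  shows "GG (w::'a) \<le> GG (0::'a)"
proof -
  have "(\<integral>\<^sup>+ z. indicator (ball (-w) 1) z * green_kernel z \<partial>lborel) \<le> (\<integral>\<^sup>+ z. indicator (ball (0::'a) 1) z * green_kernel z \<partial>lborel)"
    apply (rule bathtub[where k="ennreal (gc TYPE('a))"])
    using d by (auto simp: emeasure_ball intro: kernel_ge kernel_le)
  then show ?thesis by (simp only: GG_shift[of w] GG_shift[of "0::'a"] minus_zero)
qed

lemma exists_dyadic:
  fixes t :: real assumes "0 < t" "t < 1"
  shows "\<exists>k. (1/2)^(Suc k) \<le> t \<and> t < (1/2)^k"
proof -
  obtain n where n: "(1/2::real)^n < t" using real_arch_pow_inv[of t "1/2"] assms by auto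
  define m where "m = (LEAST n. (1/2::real)^n \<le> t)"
  have m1: "(1/2::real)^m \<le> t" unfolding m_def by (rule LeastI[of _ n]) (use n in auto)
  have "m \<noteq> 0" using m1 assms by (cases m) auto
  then obtain k where k: "m = Suc k" by (cases m) auto
  have "\<not> (1/2::real)^k \<le> t"
  proof
    assume "(1/2::real)^k \<le> t"
    then have "m \<le> k" unfolding m_def by (rule Least_le)
    then show False using k by simp
  qed
  then show ?thesis using m1 k by auto
qed

lemma kernel_dyadic:
  assumes d: "DIM('a::euclidean_space) \<ge> 3" and u: "(u::'a) \<noteq> 0" "norm u < 1"
  shows "\<exists>k. u \<in> ball 0 ((1/2)^k) \<and> green_kernel u \<le> ennreal (gc TYPE('a) * ((1/2)^(Suc k)) powr (2 - real DIM('a)))"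
proof -
  obtain k where k: "(1/2)^(Suc k) \<le> norm u" "norm u < (1/2)^k" using exists_dyadic[of "norm u"] u by auto
  have "norm u powr (2 - real DIM('a)) \<le> ((1/2)^(Suc k)) powr (2 - real DIM('a))"
    using d k by (intro powr_mono2') auto
  then have "gc TYPE('a) * norm u powr (2 - real DIM('a)) \<le> gc TYPE('a) * ((1/2)^(Suc k)) powr (2 - real DIM('a))"
    using gc_pos[OF d] by (intro mult_left_mono) auto
  then show ?thesis using u k by (intro exI[of _ k]) (auto simp: green_kernel_alt ennreal_leI)
qed

lemma arith_b:
  fixes N k :: nat and g w :: real
  shows "g * ((1/2::real)^(Suc k)) powr (2 - real (N+2)) * (w * ((1/2)^k)^(N+2)) = (g * w * 2^N) * (1/4)^k"
proof -
  have 1: "((1/2::real)^(Suc k)) powr (2 - real (N+2)) = 2 ^ (N * Suc k)"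
    by (simp add: powr_minus powr_realpow power_mult power_one_over divide_simps) (simp add: power_add power_mult[symmetric] mult.commute)
  have 2: "((1/2::real)^k) ^ (N+2) = (1/2)^(N*k) * (1/4)^k"
    by (simp add: power_add power_mult[symmetric] mult.commute power_mult_distrib[symmetric])
  have 3: "(2::real) ^ (N * Suc k) * (1/2)^(N*k) = 2^N"
    by (simp add: power_add power_one_over)
  have "g * ((1/2::real)^(Suc k)) powr (2 - real (N+2)) * (w * ((1/2)^k)^(N+2))
      = (g * w) * ((2::real) ^ (N * Suc k) * (1/2)^(N*k)) * (1/4)^k"
    unfolding 1 2 by (simp only: mult_ac)
  also have "\<dots> = (g * w * 2^N) * (1/4)^k" unfolding 3 ..
  finally show ?thesis .
qed

lemma single_le_suminf: "(f::nat \<Rightarrow> ennreal) k \<le> suminf f"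
proof -
  have "sum f {k} \<le> suminf f" by (rule sum_le_suminf) auto
  then show ?thesis by simp
qed

lemma GG0_fin:
  assumes d: "DIM('a::euclidean_space) \<ge> 3"
  shows "GG (0::'a) < top"
proof -
  define D where "D = real DIM('a)"
  define a where "a k = gc TYPE('a) * ((1/2)^(Suc k)) powr (2 - D)" for k :: nat
  define b where "b k = a k * (unit_ball_vol D * ((1/2)^k) ^ DIM('a))" for k :: nat
  have apos: "a k \<ge> 0" for k using gc_pos[OF d] by (simp add: a_def)
  have bpos: "b k \<ge> 0" for k using apos unit_ball_vol_pos[of D] by (simp add: b_def D_def)
  have "GG (0::'a) = (\<integral>\<^sup>+ u. indicator (ball (0::'a) 1) u * green_kernel u \<partial>lborel)"
    by (simp add: GG_def)
  also have "\<dots> \<le> (\<integral>\<^sup>+ u. (\<Sum>k. indicator (ball (0::'a) ((1/2)^k)) u * ennreal (a k)) \<partial>lborel)"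
  proof (rule nn_integral_mono_AE)
    show "AE u in lborel. indicator (ball (0::'a) 1) u * green_kernel u \<le> (\<Sum>k. indicator (ball (0::'a) ((1/2)^k)) u * ennreal (a k))"
      using AE_lborel_singleton[of "0::'a"]
    proof (rule eventually_mono)
      fix u :: 'a assume u0: "u \<noteq> 0"
      show "indicator (ball 0 1) u * green_kernel u \<le> (\<Sum>k. indicator (ball (0::'a) ((1/2)^k)) u * ennreal (a k))"
      proof (cases "norm u < 1")
        case True
        obtain k where k: "u \<in> ball 0 ((1/2)^k)" "green_kernel u \<le> ennreal (a k)"
          unfolding a_def D_def using kernel_dyadic[OF d u0 True] by blast
        have "indicator (ball 0 1) u * green_kernel u \<le> indicator (ball (0::'a) ((1/2)^k)) u * ennreal (a k)"
          using True k by (simp add: indicator_def)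
        also have "\<dots> \<le> (\<Sum>j. indicator (ball (0::'a) ((1/2)^j)) u * ennreal (a j))"
          by (rule single_le_suminf)
        finally show ?thesis .
      next
        case False
        then have "indicator (ball (0::'a) 1) u = (0::ennreal)" by simp
        then show ?thesis by simp
      qed
    qed
  qed
  also have "\<dots> = (\<Sum>k. (\<integral>\<^sup>+ u. indicator (ball (0::'a) ((1/2)^k)) u * ennreal (a k) \<partial>lborel))"
    by (rule nn_integral_suminf) measurable
  also have "\<dots> = (\<Sum>k. ennreal (b k))"
  proof (rule suminf_cong)
    fix k
    have "(\<integral>\<^sup>+ u. indicator (ball (0::'a) ((1/2)^k)) u * ennreal (a k) \<partial>lborel) = ennreal (a k) * emeasure lborel (ball (0::'a) ((1/2)^k))"
      by (subst mult.commute, subst nn_integral_cmult_indicator) auto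
    also have "\<dots> = ennreal (b k)"
      using apos unit_ball_vol_pos[of D] by (simp add: emeasure_ball b_def D_def ennreal_mult')
    finally show "(\<integral>\<^sup>+ u. indicator (ball (0::'a) ((1/2)^k)) u * ennreal (a k) \<partial>lborel) = ennreal (b k)" .
  qed
  also have "\<dots> = ennreal (\<Sum>k. b k)"
  proof (rule suminf_ennreal2[OF bpos])
    obtain N where N: "DIM('a) = N + 2" using d by (intro that[of "DIM('a) - 2"]) simp
    have "b k = (gc TYPE('a) * unit_ball_vol D * 2^N) * (1/4)^k" for k
      unfolding b_def a_def D_def N by (rule arith_b)
    then have "b = (\<lambda>k. (gc TYPE('a) * unit_ball_vol D * 2^N) * (1/4)^k)" by (intro ext)
    moreover have "summable (\<lambda>k. (gc TYPE('a) * unit_ball_vol D * 2^N) * (1/4::real)^k)"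
      by (intro summable_mult summable_geometric) simp
    ultimately show "summable b" by simp
  qed
  finally show ?thesis by (rule le_less_trans[OF _ ennreal_less_top])
qed

lemma GG0_pos:
  assumes d: "DIM('a::euclidean_space) \<ge> 3"
  shows "GG (0::'a) > 0"
proof -
  have "0 < ennreal (gc TYPE('a)) * emeasure lborel (ball (0::'a) 1)"
    using gc_pos[OF d] unit_ball_vol_pos[of "real DIM('a)"] by (simp add: emeasure_ball ennreal_mult[symmetric])
  also have "\<dots> = (\<integral>\<^sup>+ u. ennreal (gc TYPE('a)) * indicator (ball (0::'a) 1) u \<partial>lborel)"
    by (subst nn_integral_cmult_indicator) auto
  also have "\<dots> \<le> (\<integral>\<^sup>+ u. indicator (ball (0::'a) 1) u * green_kernel u \<partial>lborel)"
    by (intro nn_integral_mono) (auto simp: indicator_def intro: kernel_ge[OF d])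
  also have "\<dots> = GG (0::'a)" by (simp add: GG_def)
  finally show ?thesis .
qed

lemma inv_Suc_tendsto: "(\<lambda>N. 1 / real (Suc N)) \<longlonglongrightarrow> 0"
  using LIMSEQ_Suc[OF lim_1_over_n] by simp

lemma kernel_tendsto:
  fixes u y :: "'a::euclidean_space"
  assumes u: "u \<noteq> 0"
  shows "(\<lambda>N. green_kernel (u - (1 / real (Suc N)) *\<^sub>R y)) \<longlonglongrightarrow> green_kernel u"
proof -
  define z where "z N = u - (1 / real (Suc N)) *\<^sub>R y" for N
  have zt: "z \<longlonglongrightarrow> u"
    unfolding z_def using tendsto_diff[OF tendsto_const tendsto_scaleR[OF inv_Suc_tendsto tendsto_const], of u y]
    by simp
  have "(\<lambda>N. ennreal (gc TYPE('a) * norm (z N) powr (2 - real DIM('a)))) \<longlonglongrightarrow>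
        ennreal (gc TYPE('a) * norm u powr (2 - real DIM('a)))"
    using u by (intro tendsto_ennrealI tendsto_mult tendsto_const tendsto_powr tendsto_norm zt) auto
  moreover have "eventually (\<lambda>N. ennreal (gc TYPE('a) * norm (z N) powr (2 - real DIM('a))) = green_kernel (z N)) sequentially"
    using tendsto_imp_eventually_ne[OF zt u] by eventually_elim (simp add: green_kernel_alt)
  ultimately have "(\<lambda>N. green_kernel (z N)) \<longlonglongrightarrow> ennreal (gc TYPE('a) * norm u powr (2 - real DIM('a)))"
    by (rule Lim_transform_eventually)
  then show ?thesis using u by (simp add: green_kernel_alt z_def)
qed

lemma GG_liminf:
  assumes d: "DIM('a::euclidean_space) \<ge> 3"
  shows "GG (0::'a) \<le> liminf (\<lambda>N. GG ((1 / real (Suc N)) *\<^sub>R (y::'a)))"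
proof -
  have "GG (0::'a) = (\<integral>\<^sup>+ u. indicator (ball (0::'a) 1) u * green_kernel u \<partial>lborel)"
    by (simp add: GG_def)
  also have "\<dots> \<le> (\<integral>\<^sup>+ u. liminf (\<lambda>N. indicator (ball (0::'a) 1) u * green_kernel (u - (1 / real (Suc N)) *\<^sub>R y)) \<partial>lborel)"
  proof (rule nn_integral_mono_AE)
    show "AE u in lborel. indicator (ball (0::'a) 1) u * green_kernel u \<le> liminf (\<lambda>N. indicator (ball (0::'a) 1) u * green_kernel (u - (1 / real (Suc N)) *\<^sub>R y))"
      using AE_lborel_singleton[of "0::'a"]
    proof (rule eventually_mono)
      fix u :: 'a assume u0: "u \<noteq> 0"
      show "indicator (ball (0::'a) 1) u * green_kernel u \<le> liminf (\<lambda>N. indicator (ball (0::'a) 1) u * green_kernel (u - (1 / real (Suc N)) *\<^sub>R y))"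
      proof (cases "u \<in> ball 0 1")
        case True
        have "liminf (\<lambda>N. green_kernel (u - (1 / real (Suc N)) *\<^sub>R y)) = green_kernel u"
          by (rule lim_imp_Liminf[OF _ kernel_tendsto[OF u0]]) simp
        then show ?thesis using True by simp
      qed simp
    qed
  qed
  also have "\<dots> \<le> liminf (\<lambda>N. (\<integral>\<^sup>+ u. indicator (ball (0::'a) 1) u * green_kernel (u - (1 / real (Suc N)) *\<^sub>R y) \<partial>lborel))"
    by (rule nn_integral_liminf) measurable
  also have "\<dots> = liminf (\<lambda>N. GG ((1 / real (Suc N)) *\<^sub>R (y::'a)))"
    by (simp add: GG_def)
  finally show ?thesis .
qed

lemma GG_measurable[measurable]: "GG \<in> borel_measurable (borel :: 'a::euclidean_space measure)"
proof -
  have "(\<lambda>(w::'a, u). indicator (ball (0::'a) 1) u * green_kernel (u - w)) \<in> borel_measurable (borel \<Otimes>\<^sub>M lborel)"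
  proof -
    have "sets (borel \<Otimes>\<^sub>M lborel) = sets (borel \<Otimes>\<^sub>M (borel :: 'a measure))"
      by (rule sets_pair_measure_cong) auto
    moreover have "(\<lambda>(w::'a, u). indicator (ball (0::'a) 1) u * green_kernel (u - w)) \<in> borel_measurable (borel \<Otimes>\<^sub>M (borel :: 'a measure))"
      by measurable
    ultimately show ?thesis by (simp cong: measurable_cong_sets)
  qed
  then have "(\<lambda>w. \<integral>\<^sup>+ u. indicator (ball (0::'a) 1) u * green_kernel (u - w) \<partial>lborel) \<in> borel_measurable borel"
    by (rule lborel.borel_measurable_nn_integral[where f="\<lambda>w u. indicator (ball (0::'a) 1) u * green_kernel (u - w)", simplified])
  then show ?thesis unfolding GG_def[abs_def] .
qed

lemma liminf_cmult:
  fixes a :: ennreal assumes "a < top"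
  shows "liminf (\<lambda>n. a * f n) = a * liminf f"
proof -
  have "liminf (\<lambda>n. (\<lambda>x. a * x) (f n)) = (\<lambda>x. a * x) (liminf f)"
  proof (rule Liminf_compose_continuous_mono)
    show "continuous_on UNIV (\<lambda>x. a * x)"
      using assms by (intro ennreal_continuous_on_cmult continuous_on_id)
    show "mono (\<lambda>x. a * x)" unfolding mono_def by (simp add: mult_left_mono)
  qed simp
  then show ?thesis by simp
qed

lemma liminf_indicator:
  "liminf (\<lambda>n. indicator A x * (f n :: ennreal)) = indicator A x * liminf f"
  by (cases "x \<in> A") (simp_all add: Liminf_const)

context
  fixes \<nu> :: "'a::euclidean_space measure"
  assumes sets_nu: "sets \<nu> = sets borel" and sf: "sigma_finite_measure \<nu>"
begin

lemma nu_prod_measurable: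
  "(\<lambda>(x, y). indicator (ball (0::'a) r) x * green_kernel (x - y)) \<in> borel_measurable (lborel \<Otimes>\<^sub>M \<nu>)"
proof -
  have "sets (lborel \<Otimes>\<^sub>M \<nu>) = sets ((borel :: 'a measure) \<Otimes>\<^sub>M (borel :: 'a measure))"
    by (rule sets_pair_measure_cong) (auto simp: sets_nu)
  moreover have "(\<lambda>(x::'a, y). indicator (ball (0::'a) r) x * green_kernel (x - y)) \<in> borel_measurable (borel \<Otimes>\<^sub>M (borel :: 'a measure))"
    by measurable
  ultimately show ?thesis by (simp cong: measurable_cong_sets)
qed

lemma gp_measurable: "green_potential \<nu> \<in> borel_measurable (borel :: 'a measure)"
proof -
  have "(\<lambda>(x::'a, y). green_kernel (x - y)) \<in> borel_measurable (borel \<Otimes>\<^sub>M \<nu>)"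
  proof -
    have "sets (borel \<Otimes>\<^sub>M \<nu>) = sets ((borel :: 'a measure) \<Otimes>\<^sub>M (borel :: 'a measure))"
      by (rule sets_pair_measure_cong) (auto simp: sets_nu)
    moreover have "(\<lambda>(x::'a, y). green_kernel (x - y)) \<in> borel_measurable (borel \<Otimes>\<^sub>M (borel :: 'a measure))"
      by measurable
    ultimately show ?thesis by (simp cong: measurable_cong_sets)
  qed
  then have "(\<lambda>x. \<integral>\<^sup>+ y. green_kernel (x - y) \<partial>\<nu>) \<in> borel_measurable borel"
    by (rule sigma_finite_measure.borel_measurable_nn_integral[OF sf, where f="\<lambda>x y. green_kernel (x - y)", simplified])
  then show ?thesis unfolding green_potential_def[abs_def] .
qed

lemma GG_nu_measurable: "(\<lambda>y. GG (c *\<^sub>R y)) \<in> borel_measurable \<nu>"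
  unfolding measurable_cong_sets[OF sets_nu refl] by measurable

lemma potential_integral:
  assumes r: "r > 0"
  shows "(\<integral>\<^sup>+ x. indicator (ball 0 r) x * green_potential \<nu> x \<partial>lborel) = ennreal (r^2) * (\<integral>\<^sup>+ y. GG ((1/r) *\<^sub>R y) \<partial>\<nu>)"
proof -
  interpret pair_sigma_finite lborel \<nu>
    unfolding pair_sigma_finite_def using sf by (auto intro: lborel.sigma_finite_measure_axioms)
  have "(\<integral>\<^sup>+ x. indicator (ball 0 r) x * green_potential \<nu> x \<partial>lborel)
      = (\<integral>\<^sup>+ x. (\<integral>\<^sup>+ y. indicator (ball 0 r) x * green_kernel (x - y) \<partial>\<nu>) \<partial>lborel)"
    unfolding green_potential_def
  proof (rule nn_integral_cong)
    fix x :: 'a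
    have "(\<lambda>y. green_kernel (x - y)) \<in> borel_measurable \<nu>"
      unfolding measurable_cong_sets[OF sets_nu refl] by measurable
    then show "indicator (ball 0 r) x * (\<integral>\<^sup>+ y. green_kernel (x - y) \<partial>\<nu>) = (\<integral>\<^sup>+ y. indicator (ball 0 r) x * green_kernel (x - y) \<partial>\<nu>)"
      by (rule nn_integral_cmult[symmetric])
  qed
  also have "\<dots> = (\<integral>\<^sup>+ y. (\<integral>\<^sup>+ x. indicator (ball 0 r) x * green_kernel (x - y) \<partial>lborel) \<partial>\<nu>)"
    by (rule Fubini'[symmetric, where f="\<lambda>x y. indicator (ball (0::'a) r) x * green_kernel (x - y)"])
       (use nu_prod_measurable[of r] in simp)
  also have "\<dots> = (\<integral>\<^sup>+ y. ennreal (r^2) * GG ((1/r) *\<^sub>R y) \<partial>\<nu>)"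
    by (intro nn_integral_cong scale_integral r)
  also have "\<dots> = ennreal (r^2) * (\<integral>\<^sup>+ y. GG ((1/r) *\<^sub>R y) \<partial>\<nu>)"
    by (rule nn_integral_cmult) (rule GG_nu_measurable)
  finally show ?thesis .
qed

lemma GG_integral_le:
  assumes d: "DIM('a) \<ge> 3"
  shows "(\<integral>\<^sup>+ y. GG (c *\<^sub>R y) \<partial>\<nu>) \<le> GG (0::'a) * emeasure \<nu> UNIV"
proof -
  have sp: "space \<nu> = UNIV" using sets_eq_imp_space_eq[OF sets_nu] by simp
  have "(\<integral>\<^sup>+ y. GG (c *\<^sub>R y) \<partial>\<nu>) \<le> (\<integral>\<^sup>+ y. GG (0::'a) \<partial>\<nu>)"
    by (intro nn_integral_mono GG_le[OF d])
  also have "\<dots> = GG (0::'a) * emeasure \<nu> UNIV" by (simp add: sp)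
  finally show ?thesis .
qed

end

theorem mainTheorem3:
  fixes \<mu> :: "'a::euclidean_space measure" and \<mu>s :: "nat \<Rightarrow> 'a measure"
  assumes "DIM('a) \<ge> 3"
    and "sets \<mu> = sets borel"
    and "\<And>n. sets (\<mu>s n) = sets borel"
    and "sigma_finite_measure \<mu>"
    and "\<And>n. sigma_finite_measure (\<mu>s n)"
    and "\<And>x. liminf (\<lambda>n. green_potential (\<mu>s n) x) \<ge> green_potential \<mu> x"
  shows "liminf (\<lambda>n. emeasure (\<mu>s n) UNIV) \<ge> emeasure \<mu> UNIV"
proof -
  note d = assms(1)
  define L where "L = liminf (\<lambda>n. emeasure (\<mu>s n) UNIV)"
  define c where "c = GG (0::'a)"
  have c0: "c \<noteq> 0" using GG0_pos[OF d] by (simp add: c_def)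
  have ctop: "c < top" using GG0_fin[OF d] by (simp add: c_def)
  define I where "I N = (\<integral>\<^sup>+ y. GG ((1 / real (Suc N)) *\<^sub>R y) \<partial>\<mu>)" for N
  have IN: "I N \<le> c * L" for N
  proof -
    define r where "r = real (Suc N)"
    have r: "r > 0" by (simp add: r_def)
    have r2: "ennreal (r^2) \<noteq> 0" "ennreal (r^2) < top" using r by auto
    have "ennreal (r^2) * I N = (\<integral>\<^sup>+ x. indicator (ball 0 r) x * green_potential \<mu> x \<partial>lborel)"
      unfolding I_def r_def[symmetric] by (rule potential_integral[OF assms(2,4) r, symmetric])
    also have "\<dots> \<le> (\<integral>\<^sup>+ x. liminf (\<lambda>n. indicator (ball 0 r) x * green_potential (\<mu>s n) x) \<partial>lborel)"
      unfolding liminf_indicator by (intro nn_integral_mono mult_left_mono assms(6)) auto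
    also have "\<dots> \<le> liminf (\<lambda>n. (\<integral>\<^sup>+ x. indicator (ball 0 r) x * green_potential (\<mu>s n) x \<partial>lborel))"
    proof (rule nn_integral_liminf)
      fix n
      have [measurable]: "green_potential (\<mu>s n) \<in> borel_measurable borel"
        by (rule gp_measurable[OF assms(3,5)])
      show "(\<lambda>x. indicator (ball 0 r) x * green_potential (\<mu>s n) x) \<in> borel_measurable lborel"
        by measurable
    qed
    also have "\<dots> = liminf (\<lambda>n. ennreal (r^2) * (\<integral>\<^sup>+ y. GG ((1/r) *\<^sub>R y) \<partial>\<mu>s n))"
      by (simp add: potential_integral[OF assms(3,5) r])
    also have "\<dots> \<le> liminf (\<lambda>n. (ennreal (r^2) * c) * emeasure (\<mu>s n) UNIV)"
      unfolding mult.assoc c_def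
      by (intro Liminf_mono always_eventually allI mult_left_mono GG_integral_le[OF assms(3,5) d]) auto
    also have "\<dots> = (ennreal (r^2) * c) * L"
      unfolding L_def using r2 ctop by (intro liminf_cmult) (simp add: ennreal_mult_less_top)
    finally have "ennreal (r^2) * I N \<le> ennreal (r^2) * (c * L)" by (simp add: mult.assoc)
    then show ?thesis using r2 by (simp add: ennreal_mult_le_mult_iff)
  qed
  have sp: "space \<mu> = UNIV" using sets_eq_imp_space_eq[OF assms(2)] by simp
  have "c * emeasure \<mu> UNIV = (\<integral>\<^sup>+ y. c \<partial>\<mu>)" by (simp add: sp)
  also have "\<dots> \<le> (\<integral>\<^sup>+ y. liminf (\<lambda>N. GG ((1 / real (Suc N)) *\<^sub>R y)) \<partial>\<mu>)"
    unfolding c_def by (intro nn_integral_mono GG_liminf[OF d])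
  also have "\<dots> \<le> liminf I"
    unfolding I_def by (intro nn_integral_liminf GG_nu_measurable[OF assms(2,4)])
  also have "\<dots> \<le> liminf (\<lambda>_. c * L)"
    by (intro Liminf_mono always_eventually allI IN)
  also have "\<dots> = c * L" by (simp add: Liminf_const)
  finally have "c * emeasure \<mu> UNIV \<le> c * L" .
  then show ?thesis using c0 ctop by (simp add: ennreal_mult_le_mult_iff L_def)
qed

end
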